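(* Consider uplink two-user NOMA where user $U_k$ ($k=1,2$) at fixed distance $d_k>0$ from the base station transmits with SNR $\rho_k>0$, the channel gains are $X_k=|h_k|^2d_k^{-\alpha}$ with $\alpha>0$ and $h_1,h_2$ i.i.d. $\mathcal{CN}(0,1)$, and the sum rate is $R=\log_2(1+\rho_1X_1+\rho_2X_2)$. Let $\lambda_k=d_k^\alpha$ and assume $\frac{\lambda_1}{\rho_1}\neq\frac{\lambda_2}{\rho_2}$. Then $$\mathrm{E}\{R\}=\left[-\frac{\lambda_1}{\rho_1}\varphi'(2,\rho_2)+\frac{\lambda_2}{\rho_2}\varphi'(1,\rho_1)\right]\frac{1}{\frac{\lambda_2}{\rho_2}-\frac{\lambda_1}{\rho_1}},$$ where $\varphi'(k,\phi)=-\frac{1}{\ln2}e^{\lambda_k/\phi}\mathrm{Ei}(-\lambda_k/\phi)$ and $\mathrm{Ei}$ is the exponential integral. Moreover, in the high-SNR regime, for any fixed $\kappa>0$ with $\kappa\lambda_1\neq\lambda_2$, setting $\rho_2=\kappa\rho_1$, $$\lim_{\rho_1\to\infty}\left[\mathrm{E}\{R\}-\left(\left(\frac{\lambda_1}{\rho_1}\log_2\frac{\lambda_2}{\rho_2}-\frac{\lambda_2}{\rho_2}\log_2\frac{\lambda_1}{\rho_1}\right)\frac{1}{\frac{\lambda_2}{\rho_2}-\frac{\lambda_1}{\rho_1}}-\frac{C}{\ln2}\right)\right]=0,$$ where $C$ is the Euler–Mascheroni constant.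
   Context: The expectation is over the Rayleigh fading. $\mathrm{Ei}(x)=-\int_{-x}^{\infty}\frac{e^{-t}}{t}dt$ for $x<0$. *)

theory Defs
  imports "HOL-Probability.Probability"
begin

text \<open>Exponential integral for negative arguments:
  Ei x = - (integral over t from -x to infinity of exp(-t)/t), for x < 0.\<close>
definition Ei :: "real \<Rightarrow> real" where
  "Ei x = - (LBINT t:{-x..}. exp (- t) / t)"

text \<open>phi'(k, phi) of the paper, with lambda_k passed explicitly as lam.\<close>
definition phi' :: "real \<Rightarrow> real \<Rightarrow> real" where
  "phi' lam \<phi> = - (1 / ln 2) * exp (lam / \<phi>) * Ei (- lam / \<phi>)"

definition CN01_density :: "complex \<Rightarrow> ennreal" where
  "CN01_density z = ennreal (exp (- (cmod z)\<^sup>2) / pi)"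

end

theory Submission
  imports Defs "HOL-Real_Asymp.Real_Asymp"
begin


lemma cball_complex_measure:
  assumes "r \<ge> 0"
  shows "emeasure lborel (cball (0::complex) r) = ennreal (pi * r^2)"
  using emeasure_cball[OF assms, where c="0::complex"] by (simp add: unit_ball_vol_2)

lemma disc_set: "a \<ge> 0 \<Longrightarrow> {z::complex. (cmod z)\<^sup>2 \<le> a} = cball 0 (sqrt a)"
proof safe
  fix x :: complex assume "0 \<le> a" "x \<in> cball 0 (sqrt a)"
  then have "cmod x \<le> sqrt a" by simp
  then have "(cmod x)^2 \<le> (sqrt a)^2" by (intro power_mono) auto
  then show "(cmod x)^2 \<le> a" using \<open>0 \<le> a\<close> by simp
qed (auto intro: real_le_rsqrt)

lemma exp_neg_at_top: "((\<lambda>x::real. exp (- (b * x))) \<longlongrightarrow> 0) at_top" if "b > 0"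
proof -
  have "filterlim (\<lambda>x::real. b*x) at_top at_top"
    using filterlim_tendsto_pos_mult_at_top[OF tendsto_const that filterlim_ident] .
  then have "filterlim (\<lambda>x::real. -(b*x)) at_bot at_top"
    by (simp add: filterlim_uminus_at_top)
  then show ?thesis by (rule filterlim_compose[OF exp_at_bot])
qed

lemma gauss_layer:
  "ennreal (exp (- s0) / pi) = (\<integral>\<^sup>+s. ennreal (exp (- s) / pi) * indicator {s0..} s \<partial>lborel)"
proof -
  have e: "((\<lambda>x::real. exp (- (1 * x))) \<longlongrightarrow> 0) at_top" by (rule exp_neg_at_top) simp
  have l: "((\<lambda>x::real. - exp (- x) / pi) \<longlongrightarrow> 0) at_top"
    using tendsto_divide[OF tendsto_minus[OF e[simplified]] tendsto_const[of pi]] by simp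
  have "(\<integral>\<^sup>+s. ennreal (exp (- s) / pi) * indicator {s0..} s \<partial>lborel) = 0 - (- exp (- s0) / pi)"
    by (rule nn_integral_FTC_atLeast[where F="\<lambda>s. - exp (- s) / pi", OF _ _ _ l])
       (auto intro!: derivative_eq_intros simp: field_simps)
  then show ?thesis by simp
qed

lemma gauss_disc:
  assumes a: "a \<ge> 0"
  shows "(\<integral>\<^sup>+z. ennreal (exp (- (cmod z)\<^sup>2) / pi) * indicator {z::complex. (cmod z)\<^sup>2 \<le> a} z \<partial>lborel)
         = ennreal (1 - exp (- a))"
proof -
  have [measurable]: "Measurable.pred (borel \<Otimes>\<^sub>M borel) (\<lambda>x::real\<times>complex. fst x \<in> {(cmod (snd x))\<^sup>2..})"
    by simp
  have [measurable]: "{z::complex. (cmod z)\<^sup>2 \<le> a} \<in> sets borel" by measurable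
  have [measurable]: "(\<lambda>x::real\<times>complex. indicator {z. (cmod z)\<^sup>2 \<le> a} (snd x) :: ennreal) \<in> borel_measurable (lborel \<Otimes>\<^sub>M lborel)"
    by (rule measurable_compose[OF measurable_snd borel_measurable_indicator]) simp
  have "(\<integral>\<^sup>+z. ennreal (exp (- (cmod z)\<^sup>2) / pi) * indicator {z::complex. (cmod z)\<^sup>2 \<le> a} z \<partial>lborel)
     = (\<integral>\<^sup>+z. (\<integral>\<^sup>+s. ennreal (exp (- s) / pi) * indicator {(cmod z)\<^sup>2..} s
              * indicator {z::complex. (cmod z)\<^sup>2 \<le> a} z \<partial>lborel) \<partial>lborel)"
    by (intro nn_integral_cong, subst gauss_layer, rule nn_integral_multc[symmetric]) auto
  also have "\<dots> = (\<integral>\<^sup>+s. (\<integral>\<^sup>+z. ennreal (exp (- s) / pi) * indicator {(cmod z)\<^sup>2..} s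
              * indicator {z::complex. (cmod z)\<^sup>2 \<le> a} z \<partial>lborel) \<partial>lborel)"
    by (rule lborel_pair.Fubini') measurable
  also have "\<dots> = (\<integral>\<^sup>+s. ennreal (exp (- s) * min s a) * indicator {0..} s \<partial>lborel)"
  proof (intro nn_integral_cong)
    fix s :: real
    have "(\<integral>\<^sup>+z. ennreal (exp (- s) / pi) * indicator {(cmod z)\<^sup>2..} s
              * indicator {z::complex. (cmod z)\<^sup>2 \<le> a} z \<partial>lborel)
        = (\<integral>\<^sup>+z. ennreal (exp (- s) / pi) * indicator {z::complex. (cmod z)\<^sup>2 \<le> min s a} z \<partial>lborel)"
      by (intro nn_integral_cong) (auto split: split_indicator)
    also have "\<dots> = ennreal (exp (- s) / pi) * emeasure lborel {z::complex. (cmod z)\<^sup>2 \<le> min s a}"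
      by (rule nn_integral_cmult_indicator) measurable
    also have "\<dots> = ennreal (exp (- s) * min s a) * indicator {0..} s"
    proof (cases "s \<ge> 0")
      case True
      then have m: "min s a \<ge> 0" using a by simp
      have "emeasure lborel {z::complex. (cmod z)\<^sup>2 \<le> min s a} = ennreal (pi * min s a)"
        by (subst disc_set[OF m], subst cball_complex_measure) (use m in auto)
      moreover have "ennreal (exp (- s) / pi) * ennreal (pi * min s a) = ennreal (exp (- s) * min s a)"
        using m by (subst ennreal_mult[symmetric]) auto
      ultimately show ?thesis using True by simp
    next
      case False
      then have "{z::complex. (cmod z)\<^sup>2 \<le> min s a} = {}"
        by (auto simp: min_def) (smt (verit) zero_le_power2)+
      then have "emeasure lborel {z::complex. (cmod z)\<^sup>2 \<le> min s a} = 0" by (simp only: emeasure_empty)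
      then show ?thesis using False by simp
    qed
    finally show "(\<integral>\<^sup>+z. ennreal (exp (- s) / pi) * indicator {(cmod z)\<^sup>2..} s
              * indicator {z::complex. (cmod z)\<^sup>2 \<le> a} z \<partial>lborel) =
         ennreal (exp (- s) * min s a) * indicator {0..} s" .
  qed
  also have "\<dots> = (\<integral>\<^sup>+s. ennreal (s^1 * exp (- s)) * indicator {0..a} s
                     + ennreal (a * exp (- s)) * indicator {a<..} s \<partial>lborel)"
    using a by (intro nn_integral_cong) (auto split: split_indicator simp: min_def mult.commute)
  also have "\<dots> = (\<integral>\<^sup>+s. ennreal (s^1 * exp (- s)) * indicator {0..a} s \<partial>lborel)
                 + (\<integral>\<^sup>+s. ennreal (a * exp (- s)) * indicator {a<..} s \<partial>lborel)"
    by (rule nn_integral_add) auto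
  also have "(\<integral>\<^sup>+s. ennreal (a * exp (- s)) * indicator {a<..} s \<partial>lborel)
        = (\<integral>\<^sup>+s. ennreal (a * exp (- s)) * indicator {a..} s \<partial>lborel)"
    by (intro nn_integral_cong_AE) (use AE_lborel_singleton[of a] in \<open>auto elim!: eventually_mono split: split_indicator\<close>)
  also have "\<dots> = 0 - (- a * exp (- a))"
  proof (rule nn_integral_FTC_atLeast[where F="\<lambda>s. - a * exp (- s)"])
    have e: "((\<lambda>x::real. exp (- (1 * x))) \<longlongrightarrow> 0) at_top" by (rule exp_neg_at_top) simp
    show "((\<lambda>s. - a * exp (- s)) \<longlongrightarrow> 0) at_top"
      using tendsto_mult[OF tendsto_const[of "-a"] e[simplified]] by simp
  qed (use a in \<open>auto intro!: derivative_eq_intros\<close>)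
  also have "(\<integral>\<^sup>+s. ennreal (s^1 * exp (- s)) * indicator {0..a} s \<partial>lborel)
      = ennreal ((1 - (\<Sum>n\<le>1. (a^n * exp (-a)) / fact n)) * fact 1)"
    using nn_intergal_power_times_exp_Icc[OF a, of 1] by simp
  also have "ennreal ((1 - (\<Sum>n\<le>1. (a^n * exp (-a)) / fact n)) * fact 1) = ennreal (1 - exp (-a) - a * exp (-a))"
    by (simp add: algebra_simps)
  also have "ennreal (1 - exp (-a) - a * exp (-a)) + ennreal (0 - (- a * exp (- a))) = ennreal (1 - exp (-a))"
  proof -
    have "1 + a \<le> exp a" by (rule exp_ge_add_one_self)
    then have "(1 + a) * exp (-a) \<le> 1" by (simp add: exp_minus field_simps)
    then have "0 \<le> 1 - exp (-a) - a * exp (-a)" by (simp add: algebra_simps)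
    then show ?thesis using a by (subst ennreal_plus[symmetric]) auto
  qed
  finally show ?thesis .
qed

lemma (in prob_space) CN_cdf:
  assumes h: "distributed M lborel h CN01_density" and a: "a \<ge> 0"
  shows "emeasure M {\<omega>\<in>space M. (cmod (h \<omega>))\<^sup>2 \<le> a} = ennreal (1 - exp (- a))"
proof -
  have "emeasure M (h -` {z. (cmod z)\<^sup>2 \<le> a} \<inter> space M)
        = (\<integral>\<^sup>+z. CN01_density z * indicator {z::complex. (cmod z)\<^sup>2 \<le> a} z \<partial>lborel)"
    by (rule distributed_emeasure[OF h]) measurable
  also have "\<dots> = ennreal (1 - exp (- a))"
    unfolding CN01_density_def by (rule gauss_disc[OF a])
  also have "h -` {z. (cmod z)\<^sup>2 \<le> a} \<inter> space M = {\<omega>\<in>space M. (cmod (h \<omega>))\<^sup>2 \<le> a}"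
    by auto
  finally show ?thesis .
qed

lemma (in prob_space) CN_scaled_exp:
  assumes h: "distributed M lborel h CN01_density" and r: "r > 0" and d: "d > 0"
  shows "distributed M lborel (\<lambda>\<omega>. r * ((cmod (h \<omega>))\<^sup>2 * d)) (exponential_density (1 / (r * d)))"
proof (rule exponential_distributedI)
  have [measurable]: "h \<in> borel_measurable M"
    using distributed_measurable[OF h] by simp
  show "(\<lambda>\<omega>. r * ((cmod (h \<omega>))\<^sup>2 * d)) \<in> borel_measurable M" by measurable
  show "0 < 1 / (r * d)" using r d by simp
  fix a :: real assume a: "0 \<le> a"
  have "{x \<in> space M. r * ((cmod (h x))\<^sup>2 * d) \<le> a} = {x \<in> space M. (cmod (h x))\<^sup>2 \<le> a / (r * d)}"
    using r d by (auto simp: field_simps)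
  also have "emeasure M \<dots> = ennreal (1 - exp (- (a / (r * d))))"
    using a r d by (intro CN_cdf[OF h]) auto
  finally have "emeasure M {x \<in> space M. r * ((cmod (h x))\<^sup>2 * d) \<le> a} = ennreal (1 - exp (- a * (1 / (r * d))))"
    by simp
  moreover have "ennreal (1 - exp (- a * (1 / (r * d)))) = 1 - ennreal (exp (- a * (1 / (r * d))))"
    by (subst ennreal_1[symmetric], subst ennreal_minus) auto
  ultimately show "emeasure M {x \<in> space M. r * ((cmod (h x))\<^sup>2 * d) \<le> a} = 1 - ennreal (exp (- a * (1 / (r * d))))"
    by simp
qed



definition En :: "real \<Rightarrow> real" where
  "En \<mu> = (LBINT t:{\<mu>..}. exp (- t) / t)"

lemma ln_as_integral:
  assumes "x \<ge> 0"
  shows "ennreal (ln (1 + x)) = (\<integral>\<^sup>+u. ennreal (1 / (1 + u)) * indicator {0..x} u \<partial>lborel)"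
proof -
  have "(\<integral>\<^sup>+u. ennreal (1 / (1 + u)) * indicator {0..x} u \<partial>lborel) = ln (1 + x) - ln (1 + 0)"
    by (rule nn_integral_FTC_Icc[where F="\<lambda>u. ln (1 + u)"])
       (use assms in \<open>auto intro!: derivative_eq_intros simp: field_simps\<close>)
  then show ?thesis by simp
qed

lemma exp_tail:
  assumes m: "\<mu> > 0"
  shows "(\<integral>\<^sup>+x. ennreal (exp (- (\<mu> * x))) * indicator {u..} x \<partial>lborel) = ennreal (exp (- (\<mu> * u)) / \<mu>)"
proof -
  have e: "((\<lambda>x::real. exp (- (\<mu> * x))) \<longlongrightarrow> 0) at_top" by (rule exp_neg_at_top[OF m])
  have l: "((\<lambda>x::real. - exp (- (\<mu> * x)) / \<mu>) \<longlongrightarrow> 0) at_top"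
    using m tendsto_divide[OF tendsto_minus[OF e] tendsto_const[of \<mu>]] by auto
  have "(\<integral>\<^sup>+x. ennreal (exp (- (\<mu> * x))) * indicator {u..} x \<partial>lborel) = 0 - (- exp (- (\<mu> * u)) / \<mu>)"
    by (rule nn_integral_FTC_atLeast[where F="\<lambda>x. - exp (- (\<mu> * x)) / \<mu>", OF _ _ _ l])
       (use m in \<open>auto intro!: derivative_eq_intros simp: field_simps\<close>)
  then show ?thesis by simp
qed

lemma En_nn:
  assumes m: "\<mu> > 0"
  shows "(\<integral>\<^sup>+t. ennreal (indicator {\<mu>..} t * (exp (- t) / t)) \<partial>lborel) = ennreal (En \<mu>)"
    and "set_integrable lborel {\<mu>..} (\<lambda>t. exp (- t) / t)"
    and "En \<mu> \<ge> 0"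
proof -
  have le: "(\<integral>\<^sup>+t. ennreal (indicator {\<mu>..} t * (exp (- t) / t)) \<partial>lborel)
      \<le> (\<integral>\<^sup>+t. ennreal (1/\<mu>) * (ennreal (exp (- (1 * t))) * indicator {\<mu>..} t) \<partial>lborel)"
  proof (intro nn_integral_mono)
    fix t :: real
    show "ennreal (indicator {\<mu>..} t * (exp (- t) / t)) \<le> ennreal (1/\<mu>) * (ennreal (exp (- (1 * t))) * indicator {\<mu>..} t)"
    proof (cases "t \<ge> \<mu>")
      case True
      then have "exp (- t) / t \<le> exp (- t) / \<mu>" using m by (intro divide_left_mono) auto
      then show ?thesis using True m by (simp add: ennreal_mult[symmetric])
    qed simp
  qed
  also have "\<dots> = ennreal (1/\<mu>) * ennreal (exp (- (1 * \<mu>)) / 1)"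
    using exp_tail[of 1 \<mu>] by (subst nn_integral_cmult) auto
  also have "\<dots> < \<infinity>" by (simp add: ennreal_mult_less_top)
  finally have fin: "(\<integral>\<^sup>+t. ennreal (indicator {\<mu>..} t * (exp (- t) / t)) \<partial>lborel) < \<infinity>" .
  have int: "integrable lborel (\<lambda>t. indicator {\<mu>..} t * (exp (- t) / t))"
    by (rule integrableI_nonneg) (use fin m in \<open>auto split: split_indicator\<close>)
  then show "set_integrable lborel {\<mu>..} (\<lambda>t. exp (- t) / t)"
    by (simp add: set_integrable_def)
  have "(\<integral>\<^sup>+t. ennreal (indicator {\<mu>..} t * (exp (- t) / t)) \<partial>lborel) 
        = ennreal (\<integral>t. indicator {\<mu>..} t * (exp (- t) / t) \<partial>lborel)"
    by (rule nn_integral_eq_integral[OF int]) (use m in \<open>auto split: split_indicator\<close>)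
  also have "(\<integral>t. indicator {\<mu>..} t * (exp (- t) / t) \<partial>lborel) = En \<mu>"
    by (simp add: En_def set_lebesgue_integral_def)
  finally show "(\<integral>\<^sup>+t. ennreal (indicator {\<mu>..} t * (exp (- t) / t)) \<partial>lborel) = ennreal (En \<mu>)" .
  show "En \<mu> \<ge> 0"
    unfolding En_def set_lebesgue_integral_def
    by (rule integral_nonneg_AE) (use m in \<open>auto split: split_indicator\<close>)
qed

lemma key_nn:
  assumes m: "\<mu> > 0"
  shows "(\<integral>\<^sup>+x. ennreal (indicator {0..} x * (exp (- (\<mu> * x)) * ln (1 + x))) \<partial>lborel)
         = ennreal (exp \<mu> / \<mu> * En \<mu>)"
proof -
  define g where "g u = indicator {0..} u * (exp (- (\<mu> * u)) / (\<mu> * (1 + u)))" for u :: real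
  have [measurable]: "Measurable.pred (borel \<Otimes>\<^sub>M borel) (\<lambda>p::real\<times>real. fst p \<in> {0..snd p})"
    by simp
  have [measurable]: "Measurable.pred (borel \<Otimes>\<^sub>M borel) (\<lambda>p::real\<times>real. snd p \<in> {0..fst p})"
    by simp
  have "(\<integral>\<^sup>+x. ennreal (indicator {0..} x * (exp (- (\<mu> * x)) * ln (1 + x))) \<partial>lborel)
      = (\<integral>\<^sup>+x. (\<integral>\<^sup>+u. ennreal (exp (- (\<mu> * x)) / (1 + u)) * indicator {0..x} u \<partial>lborel) \<partial>lborel)"
  proof (intro nn_integral_cong)
    fix x :: real
    show "ennreal (indicator {0..} x * (exp (- (\<mu> * x)) * ln (1 + x)))
        = (\<integral>\<^sup>+u. ennreal (exp (- (\<mu> * x)) / (1 + u)) * indicator {0..x} u \<partial>lborel)"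
    proof (cases "x \<ge> 0")
      case True
      have "(\<integral>\<^sup>+u. ennreal (exp (- (\<mu> * x)) / (1 + u)) * indicator {0..x} u \<partial>lborel)
          = (\<integral>\<^sup>+u. ennreal (exp (- (\<mu> * x))) * (ennreal (1 / (1 + u)) * indicator {0..x} u) \<partial>lborel)"
        by (intro nn_integral_cong) (auto split: split_indicator simp: ennreal_mult[symmetric])
      also have "\<dots> = ennreal (exp (- (\<mu> * x))) * ennreal (ln (1 + x))"
        by (subst nn_integral_cmult) (auto simp: ln_as_integral[OF True])
      finally show ?thesis using True by (simp add: ennreal_mult[symmetric])
    next
      case False
      then have "(\<lambda>u. ennreal (exp (- (\<mu> * x)) / (1 + u)) * indicator {0..x} u) = (\<lambda>u. 0)"
        by (auto simp: fun_eq_iff split: split_indicator)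
      then show ?thesis using False by simp
    qed
  qed
  also have "\<dots> = (\<integral>\<^sup>+u. (\<integral>\<^sup>+x. ennreal (exp (- (\<mu> * x)) / (1 + u)) * indicator {0..x} u \<partial>lborel) \<partial>lborel)"
    by (rule lborel_pair.Fubini') measurable
  also have "\<dots> = (\<integral>\<^sup>+u. ennreal (g u) \<partial>lborel)"
  proof (intro nn_integral_cong)
    fix u :: real
    show "(\<integral>\<^sup>+x. ennreal (exp (- (\<mu> * x)) / (1 + u)) * indicator {0..x} u \<partial>lborel) = ennreal (g u)"
    proof (cases "u \<ge> 0")
      case True
      have "(\<integral>\<^sup>+x. ennreal (exp (- (\<mu> * x)) / (1 + u)) * indicator {0..x} u \<partial>lborel)
          = (\<integral>\<^sup>+x. ennreal (1 / (1 + u)) * (ennreal (exp (- (\<mu> * x))) * indicator {u..} x) \<partial>lborel)"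
        using True by (intro nn_integral_cong) (auto split: split_indicator simp: ennreal_mult[symmetric])
      also have "\<dots> = ennreal (1 / (1 + u)) * ennreal (exp (- (\<mu> * u)) / \<mu>)"
        by (subst nn_integral_cmult) (auto simp: exp_tail[OF m])
      also have "\<dots> = ennreal (g u)"
        using True m by (simp add: g_def ennreal_mult[symmetric] field_simps)
      finally show ?thesis .
    next
      case False
      then have "(\<lambda>x. ennreal (exp (- (\<mu> * x)) / (1 + u)) * indicator {0..x} u) = (\<lambda>x. 0)"
        by (auto simp: fun_eq_iff split: split_indicator)
      then show ?thesis using False by (simp add: g_def)
    qed
  qed
  also have "\<dots> = (\<integral>\<^sup>+u. ennreal \<mu> * ennreal (g u / \<mu>) \<partial>lborel)"
  proof (intro nn_integral_cong)
    fix u :: real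
    have "g u \<ge> 0" using m by (auto simp: g_def split: split_indicator)
    then show "ennreal (g u) = ennreal \<mu> * ennreal (g u / \<mu>)"
      using m by (simp add: ennreal_mult[symmetric])
  qed
  also have "\<dots> = ennreal \<mu> * (\<integral>\<^sup>+u. ennreal (exp \<mu> / \<mu>) * ennreal (indicator {\<mu>..} (\<mu> + \<mu> * u) * (exp (- (\<mu> + \<mu> * u)) / (\<mu> + \<mu> * u))) \<partial>lborel)"
  proof (subst nn_integral_cmult)
    show "ennreal \<mu> * (\<integral>\<^sup>+u. ennreal (g u / \<mu>) \<partial>lborel) = ennreal \<mu> * (\<integral>\<^sup>+u. ennreal (exp \<mu> / \<mu>) * ennreal (indicator {\<mu>..} (\<mu> + \<mu> * u) * (exp (- (\<mu> + \<mu> * u)) / (\<mu> + \<mu> * u))) \<partial>lborel)"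
    proof (intro arg_cong2[where f="(*)"] refl nn_integral_cong)
      fix u :: real
      have "g u / \<mu> = exp \<mu> / \<mu> * (indicator {\<mu>..} (\<mu> + \<mu> * u) * (exp (- (\<mu> + \<mu> * u)) / (\<mu> + \<mu> * u)))"
      proof (cases "u \<ge> 0")
        case True
        then have "\<mu> + \<mu> * u \<ge> \<mu>" using m by simp
        moreover have "exp (- (\<mu> + \<mu> * u)) = exp (- \<mu>) * exp (- (\<mu> * u))"
          by (simp add: exp_add[symmetric])
        moreover have "exp \<mu> * exp (- \<mu>) = 1" by (simp add: exp_minus)
        ultimately show ?thesis using True m
          by (simp add: g_def field_simps)
      next
        case False
        then have "\<mu> + \<mu> * u < \<mu>" using m by (simp add: mult_pos_neg)
        then show ?thesis using False by (simp add: g_def)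
      qed
      then show "ennreal (g u / \<mu>) = ennreal (exp \<mu> / \<mu>) * ennreal (indicator {\<mu>..} (\<mu> + \<mu> * u) * (exp (- (\<mu> + \<mu> * u)) / (\<mu> + \<mu> * u)))"
      proof -
        have "0 \<le> indicator {\<mu>..} (\<mu> + \<mu> * u) * (exp (- (\<mu> + \<mu> * u)) / (\<mu> + \<mu> * u))"
          using m by (auto split: split_indicator)
        with \<open>g u / \<mu> = _\<close> show ?thesis using m by (subst ennreal_mult[symmetric]) auto
      qed
    qed
  qed (simp add: g_def)
  also have "\<dots> = (\<integral>\<^sup>+t. ennreal (exp \<mu> / \<mu>) * ennreal (indicator {\<mu>..} t * (exp (- t) / t)) \<partial>lborel)"
    using nn_integral_real_affine[where c=\<mu> and t=\<mu> and f="\<lambda>t. ennreal (exp \<mu> / \<mu>) * ennreal (indicator {\<mu>..} t * (exp (- t) / t))"] m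
    by simp
  also have "\<dots> = ennreal (exp \<mu> / \<mu>) * ennreal (En \<mu>)"
    using En_nn(1)[OF m] by (subst nn_integral_cmult) auto
  also have "\<dots> = ennreal (exp \<mu> / \<mu> * En \<mu>)"
    using m En_nn(3)[OF m] by (subst ennreal_mult) auto
  finally show ?thesis .
qed

lemma key_integral:
  assumes m: "\<mu> > 0"
  shows "integrable lborel (\<lambda>x. indicator {0..} x * (exp (- (\<mu> * x)) * ln (1 + x)))"
    and "(\<integral>x. indicator {0..} x * (exp (- (\<mu> * x)) * ln (1 + x)) \<partial>lborel) = exp \<mu> / \<mu> * En \<mu>"
proof -
  have nn: "\<And>x. 0 \<le> indicator {0..} x * (exp (- (\<mu> * x)) * ln (1 + x))"
    by (auto split: split_indicator)
  show int: "integrable lborel (\<lambda>x. indicator {0..} x * (exp (- (\<mu> * x)) * ln (1 + x)))"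
    by (rule integrableI_nonneg) (use nn key_nn[OF m] in auto)
  have "ennreal (\<integral>x. indicator {0..} x * (exp (- (\<mu> * x)) * ln (1 + x)) \<partial>lborel) = ennreal (exp \<mu> / \<mu> * En \<mu>)"
    using nn_integral_eq_integral[OF int] nn key_nn[OF m] by simp
  moreover have "0 \<le> exp \<mu> / \<mu> * En \<mu>" using m En_nn(3)[OF m] by simp
  moreover have "0 \<le> (\<integral>x. indicator {0..} x * (exp (- (\<mu> * x)) * ln (1 + x)) \<partial>lborel)"
    using nn by (simp add: integral_nonneg_AE)
  ultimately show "(\<integral>x. indicator {0..} x * (exp (- (\<mu> * x)) * ln (1 + x)) \<partial>lborel) = exp \<mu> / \<mu> * En \<mu>"
    by simp
qed



definition sumexp :: "real \<Rightarrow> real \<Rightarrow> real \<Rightarrow> real" where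
  "sumexp m1 m2 x = (if x < 0 then 0 else m1 * m2 / (m2 - m1) * (exp (- (m1 * x)) - exp (- (m2 * x))))"

lemma sumexp_nonneg:
  assumes "m1 > 0" "m2 > 0" "m1 \<noteq> m2"
  shows "sumexp m1 m2 x \<ge> 0"
proof (cases "x < 0")
  case False
  then have x: "x \<ge> 0" by simp
  show ?thesis
  proof (cases "m1 < m2")
    case True
    then have "m1 * x \<le> m2 * x" using x by (intro mult_right_mono) auto
    then have "exp (- (m2 * x)) \<le> exp (- (m1 * x))" by simp
    then have "0 \<le> m1 * m2 / (m2 - m1) * (exp (- (m1 * x)) - exp (- (m2 * x)))"
      using True assms by (intro mult_nonneg_nonneg divide_nonneg_pos) auto
    then show ?thesis using x by (simp add: sumexp_def)
  next
    case False
    then have lt: "m2 < m1" using assms by simp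
    then have "m2 * x \<le> m1 * x" using x by (intro mult_right_mono) auto
    then have "exp (- (m1 * x)) \<le> exp (- (m2 * x))" by simp
    then have "0 \<le> m1 * m2 / (m1 - m2) * (exp (- (m2 * x)) - exp (- (m1 * x)))"
      using lt assms by (intro mult_nonneg_nonneg divide_nonneg_pos) auto
    also have "m1 * m2 / (m1 - m2) * (exp (- (m2 * x)) - exp (- (m1 * x))) = sumexp m1 m2 x"
      using x lt unfolding sumexp_def by (simp add: field_simps)
    finally show ?thesis .
  qed
qed (simp add: sumexp_def)

lemma conv_exp:
  assumes m1: "m1 > 0" and m2: "m2 > 0" and ne: "m1 \<noteq> m2"
  shows "(\<integral>\<^sup>+y. ennreal (exponential_density m1 (x - y)) * ennreal (exponential_density m2 y) \<partial>lborel)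
         = ennreal (sumexp m1 m2 x)"
proof (cases "x < 0")
  case True
  then have "(\<lambda>y. ennreal (exponential_density m1 (x - y)) * ennreal (exponential_density m2 y)) = (\<lambda>y. 0)"
    by (auto simp: fun_eq_iff exponential_density_def)
  then show ?thesis using True by (simp add: sumexp_def)
next
  case False
  then have x: "x \<ge> 0" by simp
  define G where "G y = m1 * m2 * exp (- (x - y) * m1 - y * m2)" for y
  have "(\<integral>\<^sup>+y. ennreal (exponential_density m1 (x - y)) * ennreal (exponential_density m2 y) \<partial>lborel)
      = (\<integral>\<^sup>+y. ennreal (G y) * indicator {0..x} y \<partial>lborel)"
  proof (intro nn_integral_cong)
    fix y :: real
    show "ennreal (exponential_density m1 (x - y)) * ennreal (exponential_density m2 y) = ennreal (G y) * indicator {0..x} y"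
    proof (cases "0 \<le> y \<and> y \<le> x")
      case True
      then show ?thesis using m1 m2
        by (simp add: exponential_density_def G_def ennreal_mult[symmetric] exp_diff exp_minus exp_add field_simps)
    next
      case False
      then show ?thesis by (auto simp: exponential_density_def)
    qed
  qed
  also have "\<dots> = m1 * m2 * exp (- (x - x) * m1 - x * m2) / (m1 - m2) - m1 * m2 * exp (- (x - 0) * m1 - 0 * m2) / (m1 - m2)"
  proof (rule nn_integral_FTC_Icc[where F="\<lambda>y. m1 * m2 * exp (- (x - y) * m1 - y * m2) / (m1 - m2)"])
    fix y assume "y \<in> {0..x}"
    show "DERIV (\<lambda>y. m1 * m2 * exp (- (x - y) * m1 - y * m2) / (m1 - m2)) y :> G y"
    proof -
      have d: "DERIV (\<lambda>y. exp (- (x - y) * m1 - y * m2)) y :> exp (- (x - y) * m1 - y * m2) * (m1 - m2)"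
        by (auto intro!: derivative_eq_intros simp: algebra_simps)
      have "DERIV (\<lambda>y. m1 * m2 * exp (- (x - y) * m1 - y * m2) / (m1 - m2)) y
            :> m1 * m2 * (exp (- (x - y) * m1 - y * m2) * (m1 - m2)) / (m1 - m2)"
        by (intro DERIV_cdivide DERIV_cmult d)
      then show ?thesis using ne by (simp add: G_def mult.assoc)
    qed
    show "0 \<le> G y" using m1 m2 by (simp add: G_def)
  qed (use x in \<open>auto simp: G_def\<close>)
  also have "m1 * m2 * exp (- (x - x) * m1 - x * m2) / (m1 - m2) - m1 * m2 * exp (- (x - 0) * m1 - 0 * m2) / (m1 - m2)
      = sumexp m1 m2 x"
  proof -
    have e1: "exp (- (x - x) * m1 - x * m2) = exp (- (m2 * x))" by (simp add: mult.commute)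
    have e2: "exp (- (x - 0) * m1 - 0 * m2) = exp (- (m1 * x))" by (simp add: mult.commute)
    have d1: "m1 - m2 \<noteq> 0" and d2: "m2 - m1 \<noteq> 0" using ne by auto
    have aux0: "D \<noteq> 0 \<Longrightarrow> c * a / D - c * b / D = c / (- D) * (b - a)" for a b c D :: real
      by (simp add: field_simps)
    have aux: "c * a / (m1 - m2) - c * b / (m1 - m2) = c / (m2 - m1) * (b - a)" for a b c :: real
      using aux0[OF d1, of c a b] by simp
    show ?thesis unfolding e1 e2 aux using x by (simp add: sumexp_def)
  qed
  finally show ?thesis .
qed

lemma (in prob_space) sum_exp_distributed:
  assumes m1: "m1 > 0" and m2: "m2 > 0" and ne: "m1 \<noteq> m2"
    and X: "distributed M lborel X (exponential_density m1)"
    and Y: "distributed M lborel Y (exponential_density m2)"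
    and ind: "indep_var borel X borel Y"
  shows "distributed M lborel (\<lambda>\<omega>. X \<omega> + Y \<omega>) (\<lambda>x. ennreal (sumexp m1 m2 x))"
proof -
  have "distributed M lborel (\<lambda>\<omega>. X \<omega> + Y \<omega>)
     (\<lambda>x. \<integral>\<^sup>+y. ennreal (exponential_density m1 (x - y)) * ennreal (exponential_density m2 y) \<partial>lborel)"
    by (rule distributed_convolution[OF ind X Y])
  also have "(\<lambda>x. \<integral>\<^sup>+y. ennreal (exponential_density m1 (x - y)) * ennreal (exponential_density m2 y) \<partial>lborel)
      = (\<lambda>x. ennreal (sumexp m1 m2 x))"
    using conv_exp[OF m1 m2 ne] by (simp add: fun_eq_iff)
  finally show ?thesis .
qed

lemma (in prob_space) ER_formula:
  assumes m1: "m1 > 0" and m2: "m2 > 0" and ne: "m1 \<noteq> m2"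
    and X: "distributed M lborel X (exponential_density m1)"
    and Y: "distributed M lborel Y (exponential_density m2)"
    and ind: "indep_var borel X borel Y"
  shows "(\<integral>\<omega>. log 2 (1 + X \<omega> + Y \<omega>) \<partial>M)
       = (m2 * exp m1 * En m1 - m1 * exp m2 * En m2) / ((m2 - m1) * ln 2)"
proof -
  define c where "c = m1 * m2 / ((m2 - m1) * ln 2)"
  define f where "f m x = indicator {0..} x * (exp (- (m * x)) * ln (1 + x))" for m x :: real
  have S: "distributed M lborel (\<lambda>\<omega>. X \<omega> + Y \<omega>) (\<lambda>x. ennreal (sumexp m1 m2 x))"
    by (rule sum_exp_distributed[OF assms])
  have "(\<integral>x. sumexp m1 m2 x * log 2 (1 + x) \<partial>lborel) = (\<integral>\<omega>. log 2 (1 + (X \<omega> + Y \<omega>)) \<partial>M)"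
    by (rule distributed_integral[OF S]) (auto simp: sumexp_nonneg[OF m1 m2 ne])
  then have "(\<integral>\<omega>. log 2 (1 + X \<omega> + Y \<omega>) \<partial>M) = (\<integral>x. sumexp m1 m2 x * log 2 (1 + x) \<partial>lborel)"
    by (simp add: add.assoc)
  also have "\<dots> = (\<integral>x. c * (f m1 x - f m2 x) \<partial>lborel)"
    using ne by (intro Bochner_Integration.integral_cong refl)
       (auto simp: sumexp_def f_def c_def log_def field_simps split: split_indicator)
  also have "\<dots> = c * ((\<integral>x. f m1 x \<partial>lborel) - (\<integral>x. f m2 x \<partial>lborel))"
    using key_integral(1)[OF m1] key_integral(1)[OF m2] unfolding f_def
    by (simp add: integral_diff)
  also have "\<dots> = c * (exp m1 / m1 * En m1 - exp m2 / m2 * En m2)"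
    using key_integral(2)[OF m1] key_integral(2)[OF m2] unfolding f_def by simp
  also have "\<dots> = (m2 * exp m1 * En m1 - m1 * exp m2 * En m2) / ((m2 - m1) * ln 2)"
    using m1 m2 ne unfolding c_def by (simp add: field_simps)
  finally show ?thesis .
qed



definition g0 :: "real \<Rightarrow> real" where
  "g0 t = (if t \<le> 0 then 0 else if t \<le> 1 then (exp (- t) - 1) / t else exp (- t) / t)"

definition w0 :: "real \<Rightarrow> real" where
  "w0 t = indicator {0..} t * exp (1 - t)"

lemma g0_measurable [measurable]: "g0 \<in> borel_measurable borel"
  unfolding g0_def by measurable

lemma w0_measurable [measurable]: "w0 \<in> borel_measurable borel"
  unfolding w0_def by measurable

lemma w0_integrable: "integrable lborel w0"
proof (rule integrableI_nonneg)
  show "w0 \<in> borel_measurable lborel" by simp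
  show "AE x in lborel. 0 \<le> w0 x" by (auto simp: w0_def)
  have "(\<integral>\<^sup>+x. ennreal (w0 x) \<partial>lborel) = (\<integral>\<^sup>+x. ennreal (exp 1) * (ennreal (exp (- (1 * x))) * indicator {0..} x) \<partial>lborel)"
    by (intro nn_integral_cong) (auto simp: w0_def ennreal_mult[symmetric] exp_diff exp_minus field_simps split: split_indicator)
  also have "\<dots> = ennreal (exp 1) * ennreal (exp (- (1 * 0)) / 1)"
    using exp_tail[of 1 0] by (subst nn_integral_cmult) auto
  finally show "(\<integral>\<^sup>+x. ennreal (w0 x) \<partial>lborel) < \<infinity>" by (simp add: ennreal_mult_less_top)
qed

lemma exp_minus_bound: "(t::real) \<ge> 0 \<Longrightarrow> \<bar>exp (- t) - 1\<bar> \<le> t"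
proof -
  assume t: "t \<ge> 0"
  have "1 + (- t) \<le> exp (- t)" using exp_ge_add_one_self[of "-t"] by simp
  moreover have "exp (- t) \<le> 1" using t by simp
  ultimately show ?thesis by simp
qed

lemma g0_bound:
  assumes h: "0 \<le> h" "h \<le> 1"
  shows "\<bar>t powr h * g0 t\<bar> \<le> w0 t"
proof (cases "t \<le> 0")
  case True then show ?thesis by (auto simp: g0_def w0_def split: split_indicator)
next
  case False
  then have t: "t > 0" by simp
  show ?thesis
  proof (cases "t \<le> 1")
    case True
    have "t powr h \<le> 1 powr h" by (rule powr_mono2) (use t True h in auto)
    then have "t powr h \<le> 1" by simp
    moreover have "\<bar>g0 t\<bar> \<le> 1"
      using t True exp_minus_bound[of t] by (simp add: g0_def abs_div)
    moreover have "1 \<le> exp (1 - t)" using True by simp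
    moreover have "0 \<le> t powr h" by simp
    ultimately have "t powr h * \<bar>g0 t\<bar> \<le> 1" by (intro mult_le_one) auto
    then have "t powr h * \<bar>g0 t\<bar> \<le> exp (1 - t)" using \<open>1 \<le> exp (1 - t)\<close> by linarith
    then show ?thesis using t by (simp add: w0_def abs_mult)
  next
    case False
    then have t1: "t > 1" by simp
    have "t powr h \<le> t powr 1" using t1 h by (intro powr_mono) auto
    then have p: "t powr h \<le> t" using t by simp
    have "\<bar>t powr h * g0 t\<bar> = t powr h * (exp (- t) / t)"
      using t1 by (simp add: g0_def abs_mult)
    also have "\<dots> \<le> t * (exp (- t) / t)" using p t by (intro mult_right_mono) auto
    also have "\<dots> = exp (- t)" using t by simp
    also have "\<dots> \<le> exp (1 - t)" by simp
    finally show ?thesis using t by (simp add: w0_def)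
  qed
qed

lemma g0_bound0: "\<bar>g0 t\<bar> \<le> w0 t"
  using g0_bound[of 0 t] by (cases "t = 0") (auto simp: g0_def w0_def)

lemma g0_integrable: "integrable lborel g0"
proof (rule Bochner_Integration.integrable_bound[OF w0_integrable])
  have "\<And>x. \<bar>g0 x\<bar> \<le> \<bar>w0 x\<bar>" using g0_bound0 by (metis abs_ge_self order_trans)
  then show "AE x in lborel. norm (g0 x) \<le> norm (w0 x)" by simp
qed simp

lemma En_ln_eq:
  assumes m: "0 < \<mu>" "\<mu> \<le> 1"
  shows "En \<mu> + ln \<mu> = (\<integral>t. indicator {\<mu>..} t * g0 t \<partial>lborel)"
proof -
  have i1: "integrable lborel (\<lambda>t. indicator {\<mu>..} t * (exp (- t) / t))"
    using En_nn(2)[of \<mu>] m by (simp add: set_integrable_def)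
  have c: "\<And>t. \<mu> \<le> t \<Longrightarrow> t \<le> 1 \<Longrightarrow> isCont (\<lambda>t. 1 / t) t" using m by (auto intro!: continuous_intros)
  have i2: "integrable lborel (\<lambda>t. 1 / t * indicator {\<mu>..1} t)"
    by (rule borel_integrable_atLeastAtMost) (use m in \<open>auto intro!: continuous_intros\<close>)
  have I2: "(\<integral>t. 1 / t * indicator {\<mu>..1} t \<partial>lborel) = ln 1 - ln \<mu>"
    by (rule integral_FTC_Icc_nonneg[where F=ln]) (use m in \<open>auto intro!: derivative_eq_intros\<close>)
  have "(\<integral>t. indicator {\<mu>..} t * g0 t \<partial>lborel)
     = (\<integral>t. indicator {\<mu>..} t * (exp (- t) / t) - 1 / t * indicator {\<mu>..1} t \<partial>lborel)"
    using m by (intro Bochner_Integration.integral_cong refl)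
       (auto simp: g0_def diff_divide_distrib split: split_indicator)
  also have "\<dots> = (\<integral>t. indicator {\<mu>..} t * (exp (- t) / t) \<partial>lborel) - (\<integral>t. 1 / t * indicator {\<mu>..1} t \<partial>lborel)"
    by (rule Bochner_Integration.integral_diff[OF i1 i2])
  also have "(\<integral>t. indicator {\<mu>..} t * (exp (- t) / t) \<partial>lborel) = En \<mu>"
    by (simp add: En_def set_lebesgue_integral_def)
  finally show ?thesis using I2 by simp
qed

lemma En_ln_limit:
  assumes c: "c > 0"
  shows "((\<lambda>s. En (c / s) + ln (c / s)) \<longlongrightarrow> integral\<^sup>L lborel g0) at_top"
proof -
  have "((\<lambda>s. \<integral>t. indicator {c / s..} t * g0 t \<partial>lborel) \<longlongrightarrow> integral\<^sup>L lborel g0) at_top"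
  proof (rule integral_dominated_convergence_at_top[where w=w0])
    show "g0 \<in> borel_measurable lborel" by simp
    show "(\<lambda>t. indicator {c / s..} t * g0 t) \<in> borel_measurable lborel" for s by measurable
    show "integrable lborel w0" by (rule w0_integrable)
    show "AE t in lborel. ((\<lambda>s. indicator {c / s..} t * g0 t) \<longlongrightarrow> g0 t) at_top"
    proof (intro AE_I2)
      fix t :: real
      show "((\<lambda>s. indicator {c / s..} t * g0 t) \<longlongrightarrow> g0 t) at_top"
      proof (cases "t > 0")
        case True
        have "eventually (\<lambda>s. s \<ge> c / t) at_top" by (rule eventually_ge_at_top)
        then have "eventually (\<lambda>s. indicator {c / s..} t * g0 t = g0 t) at_top"
        proof (rule eventually_mono)
          fix s assume "s \<ge> c / t"
          moreover have "c / t > 0" using True c by simp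
          ultimately have sp: "s > 0" by linarith
          have "c \<le> s * t" using \<open>s \<ge> c / t\<close> True by (simp add: divide_le_eq)
          then have "c / s \<le> t" using sp by (simp add: divide_le_eq mult.commute)
          then show "indicator {c / s..} t * g0 t = g0 t" by simp
        qed
        then show ?thesis by (rule tendsto_eventually)
      next
        case False
        then show ?thesis by (simp add: g0_def)
      qed
    qed
    have "norm (indicator {c / s..} t * g0 t) \<le> w0 t" for s t
      using g0_bound0[of t] by (auto split: split_indicator simp: w0_def)
    then show "\<forall>\<^sub>F s in at_top. AE t in lborel. norm (indicator {c / s..} t * g0 t) \<le> w0 t"
      by (intro always_eventually allI AE_I2)
  qed
  moreover have "eventually (\<lambda>s. (\<integral>t. indicator {c / s..} t * g0 t \<partial>lborel) = En (c / s) + ln (c / s)) at_top"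
    using eventually_ge_at_top[of c]
  proof (rule eventually_mono)
    fix s assume "c \<le> s"
    then have "0 < c / s" "c / s \<le> 1" using c by auto
    then show "(\<integral>t. indicator {c / s..} t * g0 t \<partial>lborel) = En (c / s) + ln (c / s)"
      using En_ln_eq by simp
  qed
  ultimately show ?thesis by (rule Lim_transform_eventually)
qed



lemma Gamma_eq:
  assumes h: "0 < h" "h \<le> 1"
  shows "Gamma h - 1 / h = (\<integral>t. t powr h * g0 t \<partial>lborel)"
proof -
  define f1 where "f1 t = indicator {0..} t * t powr (h - 1) / exp t" for t :: real
  define f2 where "f2 t = indicator {0..1} t * t powr (h - 1)" for t :: real
  have [measurable]: "f1 \<in> borel_measurable borel" unfolding f1_def by measurable
  have [measurable]: "f2 \<in> borel_measurable borel" unfolding f2_def by measurable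
  have nn1: "(\<integral>\<^sup>+t. ennreal (f1 t) \<partial>lborel) = ennreal (Gamma h)"
    using Gamma_conv_nn_integral_real[OF h(1)] unfolding f1_def by simp
  have f1nn: "\<And>t. 0 \<le> f1 t" by (auto simp: f1_def split: split_indicator)
  have i1: "integrable lborel f1"
    by (rule integrableI_nonneg) (use nn1 f1nn in \<open>auto simp: f1_def\<close>)
  have I1: "(\<integral>t. f1 t \<partial>lborel) = Gamma h"
  proof -
    have "ennreal (\<integral>t. f1 t \<partial>lborel) = ennreal (Gamma h)"
      using nn_integral_eq_integral[OF i1] f1nn nn1 by simp
    moreover have "0 \<le> (\<integral>t. f1 t \<partial>lborel)" using f1nn by (simp add: integral_nonneg_AE)
    moreover have "0 \<le> Gamma h" using h by (simp add: Gamma_real_pos less_imp_le)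
    ultimately show ?thesis by simp
  qed
  have hi: "((\<lambda>x. x powr (h - 1)) has_integral (1 powr (h - 1 + 1) / (h - 1 + 1))) {0..1}"
    by (rule has_integral_powr_from_0) (use h in auto)
  have nn2: "(\<integral>\<^sup>+t. ennreal (f2 t) \<partial>lborel) = ennreal (1 / h)"
    using nn_integral_has_integral_lebesgue[OF _ hi] unfolding f2_def by simp
  have f2nn: "\<And>t. 0 \<le> f2 t" by (auto simp: f2_def split: split_indicator)
  have i2: "integrable lborel f2"
    by (rule integrableI_nonneg) (use nn2 f2nn in \<open>auto simp: f2_def\<close>)
  have I2: "(\<integral>t. f2 t \<partial>lborel) = 1 / h"
  proof -
    have "ennreal (\<integral>t. f2 t \<partial>lborel) = ennreal (1 / h)"
      using nn_integral_eq_integral[OF i2] f2nn nn2 by simp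
    moreover have "0 \<le> (\<integral>t. f2 t \<partial>lborel)" using f2nn by (simp add: integral_nonneg_AE)
    moreover have "0 \<le> 1 / h" using h by simp
    ultimately show ?thesis by simp
  qed
  have "(\<integral>t. t powr h * g0 t \<partial>lborel) = (\<integral>t. f1 t - f2 t \<partial>lborel)"
  proof (intro Bochner_Integration.integral_cong refl)
    fix t :: real
    show "t powr h * g0 t = f1 t - f2 t"
    proof (cases "t > 0")
      case True
      have p: "t powr (h - 1) = t powr h / t" using True by (simp add: powr_diff)
      show ?thesis using True unfolding f1_def f2_def g0_def p
        by (auto simp: exp_minus field_simps split: split_indicator)
    next
      case False
      then show ?thesis by (cases "t = 0") (auto simp: f1_def f2_def g0_def)
    qed
  qed
  also have "\<dots> = Gamma h - 1 / h"
    using I1 I2 by (simp add: Bochner_Integration.integral_diff[OF i1 i2])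
  finally show ?thesis by simp
qed

lemma inv_at_top_0: "((\<lambda>s::real. 1 / s) \<longlongrightarrow> 0) at_top"
  by real_asymp

lemma Gamma_limit_g0: "((\<lambda>s::real. Gamma (1 / s) - s) \<longlongrightarrow> integral\<^sup>L lborel g0) at_top"
proof -
  have "((\<lambda>s. \<integral>t. t powr (1 / s) * g0 t \<partial>lborel) \<longlongrightarrow> integral\<^sup>L lborel g0) at_top"
  proof (rule integral_dominated_convergence_at_top[where w=w0])
    show "g0 \<in> borel_measurable lborel" by simp
    show "(\<lambda>t. t powr (1 / s) * g0 t) \<in> borel_measurable lborel" for s by measurable
    show "integrable lborel w0" by (rule w0_integrable)
    show "AE t in lborel. ((\<lambda>s. t powr (1 / s) * g0 t) \<longlongrightarrow> g0 t) at_top"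
    proof (intro AE_I2)
      fix t :: real
      show "((\<lambda>s. t powr (1 / s) * g0 t) \<longlongrightarrow> g0 t) at_top"
      proof (cases "t > 0")
        case True
        have "((\<lambda>s. t powr (1 / s)) \<longlongrightarrow> t powr 0) at_top"
          by (rule tendsto_powr[OF tendsto_const inv_at_top_0]) (use True in auto)
        then have "((\<lambda>s. t powr (1 / s) * g0 t) \<longlongrightarrow> t powr 0 * g0 t) at_top"
          by (rule tendsto_mult_right)
        then show ?thesis using True by simp
      next
        case False
        then show ?thesis by (simp add: g0_def)
      qed
    qed
    show "\<forall>\<^sub>F s in at_top. AE t in lborel. norm (t powr (1 / s) * g0 t) \<le> w0 t"
      using eventually_ge_at_top[of 1]
    proof (rule eventually_mono)
      fix s :: real assume "1 \<le> s"
      then have "0 \<le> 1 / s" "1 / s \<le> 1" by auto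
      then show "AE t in lborel. norm (t powr (1 / s) * g0 t) \<le> w0 t"
        using g0_bound by (intro AE_I2) simp
    qed
  qed
  moreover have "eventually (\<lambda>s. (\<integral>t. t powr (1 / s) * g0 t \<partial>lborel) = Gamma (1 / s) - s) at_top"
    using eventually_ge_at_top[of 1]
  proof (rule eventually_mono)
    fix s :: real assume "1 \<le> s"
    then have "0 < 1 / s" "1 / s \<le> 1" by auto
    from Gamma_eq[OF this] show "(\<integral>t. t powr (1 / s) * g0 t \<partial>lborel) = Gamma (1 / s) - s"
      using \<open>1 \<le> s\<close> by simp
  qed
  ultimately show ?thesis by (rule Lim_transform_eventually)
qed

lemma Gamma_limit_gamma: "((\<lambda>s::real. Gamma (1 / s) - s) \<longlongrightarrow> - euler_mascheroni) at_top"
proof -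
  have "(Gamma has_field_derivative Gamma 1 * Digamma 1) (at (1::real))"
    by (rule has_field_derivative_Gamma) simp
  then have T: "((\<lambda>h. (Gamma (1 + h) - Gamma 1) / h) \<longlongrightarrow> - euler_mascheroni) (at (0::real))"
    by (simp add: DERIV_def)
  have FL: "filterlim (\<lambda>s::real. 1 / s) (at 0) at_top"
  proof -
    have "filterlim (\<lambda>s::real. inverse s) (at_right 0) at_top" by (rule filterlim_inverse_at_right_top)
    then have "filterlim (\<lambda>s::real. inverse s) (at 0) at_top"
      by (rule filterlim_mono) (auto simp: at_within_le_at)
    then show ?thesis by (simp add: inverse_eq_divide)
  qed
  have "((\<lambda>s::real. (Gamma (1 + 1 / s) - Gamma 1) / (1 / s)) \<longlongrightarrow> - euler_mascheroni) at_top"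
    using filterlim_compose[OF T FL] by simp
  moreover have "eventually (\<lambda>s::real. (Gamma (1 + 1 / s) - Gamma 1) / (1 / s) = Gamma (1 / s) - s) at_top"
    using eventually_gt_at_top[of 0]
  proof (rule eventually_mono)
    fix s :: real assume s: "0 < s"
    have "(1 / s) \<notin> \<int>\<^sub>\<le>\<^sub>0" using s nonpos_Ints_nonpos[of "1/s"] by auto
    then have "Gamma (1 / s + 1) = 1 / s * Gamma (1 / s)" by (rule Gamma_plus1)
    then show "(Gamma (1 + 1 / s) - Gamma 1) / (1 / s) = Gamma (1 / s) - s"
      using s by (simp add: add.commute field_simps)
  qed
  ultimately show ?thesis by (rule Lim_transform_eventually)
qed

lemma g0_integral: "integral\<^sup>L lborel g0 = - euler_mascheroni"
  using tendsto_unique[OF _ Gamma_limit_g0 Gamma_limit_gamma] by simp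

lemma B_limit:
  assumes c: "c > 0"
  shows "((\<lambda>s. exp (c / s) * En (c / s) + ln (c / s) + euler_mascheroni) \<longlongrightarrow> 0) at_top"
proof -
  have L1: "((\<lambda>s. En (c / s) + ln (c / s) + euler_mascheroni) \<longlongrightarrow> 0) at_top"
    using tendsto_add[OF En_ln_limit[OF c] tendsto_const[of euler_mascheroni]] by (simp add: g0_integral)
  have L2: "((\<lambda>s. exp (c / s)) \<longlongrightarrow> 1) at_top" using c by real_asymp
  have L3: "((\<lambda>s. (exp (c / s) - 1) * ln (c / s)) \<longlongrightarrow> 0) at_top" using c by real_asymp
  have L4: "((\<lambda>s. (exp (c / s) - 1) * euler_mascheroni) \<longlongrightarrow> 0) at_top"
    using tendsto_mult[OF tendsto_diff[OF L2 tendsto_const[of 1]] tendsto_const[of euler_mascheroni]] by simp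
  have "((\<lambda>s. exp (c / s) * (En (c / s) + ln (c / s) + euler_mascheroni)
        - ((exp (c / s) - 1) * ln (c / s) + (exp (c / s) - 1) * euler_mascheroni)) \<longlongrightarrow> 1 * 0 - (0 + 0)) at_top"
    by (intro tendsto_intros L1 L2 L3 L4)
  then show ?thesis by (simp add: algebra_simps)
qed



lemma phi'_En: "phi' l r = exp (l / r) * En (l / r) / ln 2"
  by (simp add: phi'_def Ei_def En_def)

lemma alg_identity:
  fixes m1 m2 A1 A2 L1 L2 g q :: real
  assumes "m1 \<noteq> m2" "q \<noteq> 0"
  shows "(m2 * A1 - m1 * A2) / ((m2 - m1) * q) - ((m1 * (L2 / q) - m2 * (L1 / q)) * (1 / (m2 - m1)) - g / q)
       = (m2 / (m2 - m1)) * ((A1 + L1 + g) / q) - (m1 / (m2 - m1)) * ((A2 + L2 + g) / q)"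
proof -
  define D where "D = m2 - m1"
  have D: "D \<noteq> 0" using assms by (simp add: D_def)
  have m2: "m2 = m1 + D" by (simp add: D_def)
  show ?thesis unfolding m2 using D assms(2) by (simp add: field_simps)
qed

theorem proposition3:
  fixes M :: "'a measure" and h1 h2 :: "'a \<Rightarrow> complex" and d1 d2 \<alpha> :: real
  assumes "prob_space M"
    and "distributed M lborel h1 CN01_density"
    and "distributed M lborel h2 CN01_density"
    and "prob_space.indep_var M borel h1 borel h2"
    and "d1 > 0" and "d2 > 0" and "\<alpha> > 0"
  defines "l1 \<equiv> d1 powr \<alpha>" and "l2 \<equiv> d2 powr \<alpha>"
    and "ER \<equiv> (\<lambda>\<rho>1 \<rho>2. \<integral>\<omega>. log 2 (1 + \<rho>1 * ((cmod (h1 \<omega>))\<^sup>2 * d1 powr (- \<alpha>))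
                                  + \<rho>2 * ((cmod (h2 \<omega>))\<^sup>2 * d2 powr (- \<alpha>))) \<partial>M)"
  shows "(\<forall>\<rho>1 \<rho>2. \<rho>1 > 0 \<and> \<rho>2 > 0 \<and> l1 / \<rho>1 \<noteq> l2 / \<rho>2 \<longrightarrow>
            ER \<rho>1 \<rho>2 = (- (l1 / \<rho>1) * phi' l2 \<rho>2 + (l2 / \<rho>2) * phi' l1 \<rho>1)
                         * (1 / (l2 / \<rho>2 - l1 / \<rho>1)))
       \<and> (\<forall>\<kappa>. \<kappa> > 0 \<and> \<kappa> * l1 \<noteq> l2 \<longrightarrow>
            ((\<lambda>\<rho>. ER \<rho> (\<kappa> * \<rho>)
                 - (((l1 / \<rho>) * log 2 (l2 / (\<kappa> * \<rho>)) - (l2 / (\<kappa> * \<rho>)) * log 2 (l1 / \<rho>))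
                      * (1 / (l2 / (\<kappa> * \<rho>) - l1 / \<rho>))
                    - euler_mascheroni / ln 2))
             \<longlongrightarrow> 0) at_top)"
proof -
  interpret P: prob_space M by (rule assms(1))
  have l1: "l1 > 0" and l2: "l2 > 0" using assms(5,6) by (simp_all add: l1_def l2_def)
  have c1: "d1 powr (- \<alpha>) > 0" and c2: "d2 powr (- \<alpha>) > 0" using assms(5,6) by simp_all
  have rate1: "1 / (r * d1 powr (- \<alpha>)) = l1 / r" for r
    by (simp add: l1_def powr_minus field_simps)
  have rate2: "1 / (r * d2 powr (- \<alpha>)) = l2 / r" for r
    by (simp add: l2_def powr_minus field_simps)
  have [measurable]: "h1 \<in> borel_measurable M" "h2 \<in> borel_measurable M"
    using distributed_measurable[OF assms(2)] distributed_measurable[OF assms(3)] by simp_all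
  have ER_eq: "ER \<rho>1 \<rho>2 = (l2 / \<rho>2 * exp (l1 / \<rho>1) * En (l1 / \<rho>1) - l1 / \<rho>1 * exp (l2 / \<rho>2) * En (l2 / \<rho>2))
                    / ((l2 / \<rho>2 - l1 / \<rho>1) * ln 2)"
    if r: "\<rho>1 > 0" "\<rho>2 > 0" "l1 / \<rho>1 \<noteq> l2 / \<rho>2" for \<rho>1 \<rho>2
  proof -
    have X: "distributed M lborel (\<lambda>\<omega>. \<rho>1 * ((cmod (h1 \<omega>))\<^sup>2 * d1 powr (- \<alpha>))) (exponential_density (l1 / \<rho>1))"
      using P.CN_scaled_exp[OF assms(2) r(1) c1] by (simp add: rate1)
    have Y: "distributed M lborel (\<lambda>\<omega>. \<rho>2 * ((cmod (h2 \<omega>))\<^sup>2 * d2 powr (- \<alpha>))) (exponential_density (l2 / \<rho>2))"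
      using P.CN_scaled_exp[OF assms(3) r(2) c2] by (simp add: rate2)
    have "P.indep_var borel ((\<lambda>z. \<rho>1 * ((cmod z)\<^sup>2 * d1 powr (- \<alpha>))) \<circ> h1) borel ((\<lambda>z. \<rho>2 * ((cmod z)\<^sup>2 * d2 powr (- \<alpha>))) \<circ> h2)"
      by (rule P.indep_var_compose[OF assms(4)]) simp_all
    then have I: "P.indep_var borel (\<lambda>\<omega>. \<rho>1 * ((cmod (h1 \<omega>))\<^sup>2 * d1 powr (- \<alpha>))) borel (\<lambda>\<omega>. \<rho>2 * ((cmod (h2 \<omega>))\<^sup>2 * d2 powr (- \<alpha>)))"
      by (simp add: o_def)
    have "l1 / \<rho>1 > 0" "l2 / \<rho>2 > 0" using l1 l2 r by simp_all
    from P.ER_formula[OF this r(3) X Y I] show ?thesis unfolding ER_def by simp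
  qed
  have part1: "\<forall>\<rho>1 \<rho>2. \<rho>1 > 0 \<and> \<rho>2 > 0 \<and> l1 / \<rho>1 \<noteq> l2 / \<rho>2 \<longrightarrow>
            ER \<rho>1 \<rho>2 = (- (l1 / \<rho>1) * phi' l2 \<rho>2 + (l2 / \<rho>2) * phi' l1 \<rho>1)
                         * (1 / (l2 / \<rho>2 - l1 / \<rho>1))"
  proof (intro allI impI)
    fix \<rho>1 \<rho>2 :: real assume r: "\<rho>1 > 0 \<and> \<rho>2 > 0 \<and> l1 / \<rho>1 \<noteq> l2 / \<rho>2"
    then have ne: "l2 / \<rho>2 - l1 / \<rho>1 \<noteq> 0" by simp
    show "ER \<rho>1 \<rho>2 = (- (l1 / \<rho>1) * phi' l2 \<rho>2 + (l2 / \<rho>2) * phi' l1 \<rho>1) * (1 / (l2 / \<rho>2 - l1 / \<rho>1))"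
      using ER_eq[of \<rho>1 \<rho>2] r ne by (simp add: phi'_En field_simps)
  qed
  have part2: "((\<lambda>\<rho>. ER \<rho> (\<kappa> * \<rho>)
                 - (((l1 / \<rho>) * log 2 (l2 / (\<kappa> * \<rho>)) - (l2 / (\<kappa> * \<rho>)) * log 2 (l1 / \<rho>))
                      * (1 / (l2 / (\<kappa> * \<rho>) - l1 / \<rho>))
                    - euler_mascheroni / ln 2))
             \<longlongrightarrow> 0) at_top" if k: "\<kappa> > 0" "\<kappa> * l1 \<noteq> l2" for \<kappa>
  proof -
    define c where "c = l2 / \<kappa>"
    have c: "c > 0" using l2 k by (simp add: c_def)
    have cne: "c - l1 \<noteq> 0" using k by (auto simp: c_def field_simps)
    define K1 where "K1 = l1 / (c - l1)"
    define K2 where "K2 = c / (c - l1)"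
    define B where "B a s = exp (a / s) * En (a / s) + ln (a / s) + euler_mascheroni" for a s :: real
    have "((\<lambda>s. K2 * (B l1 s / ln 2) - K1 * (B c s / ln 2)) \<longlongrightarrow> K2 * (0 / ln 2) - K1 * (0 / ln 2)) at_top"
      unfolding B_def by (intro tendsto_intros B_limit l1 c) simp_all
    then have lim: "((\<lambda>s. K2 * (B l1 s / ln 2) - K1 * (B c s / ln 2)) \<longlongrightarrow> 0) at_top" by simp
    have ev: "eventually (\<lambda>\<rho>. K2 * (B l1 \<rho> / ln 2) - K1 * (B c \<rho> / ln 2) =
              ER \<rho> (\<kappa> * \<rho>)
                 - (((l1 / \<rho>) * log 2 (l2 / (\<kappa> * \<rho>)) - (l2 / (\<kappa> * \<rho>)) * log 2 (l1 / \<rho>))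
                      * (1 / (l2 / (\<kappa> * \<rho>) - l1 / \<rho>))
                    - euler_mascheroni / ln 2)) at_top"
      using eventually_gt_at_top[of 0]
    proof (rule eventually_mono)
      fix \<rho> :: real assume r: "\<rho> > 0"
      have m2: "l2 / (\<kappa> * \<rho>) = c / \<rho>" by (simp add: c_def)
      have ne: "l1 / \<rho> \<noteq> c / \<rho>" using cne r by (auto simp: field_simps)
      have ER1: "ER \<rho> (\<kappa> * \<rho>) = (c / \<rho> * exp (l1 / \<rho>) * En (l1 / \<rho>) - l1 / \<rho> * exp (c / \<rho>) * En (c / \<rho>))
                    / ((c / \<rho> - l1 / \<rho>) * ln 2)"
        using ER_eq[of \<rho> "\<kappa> * \<rho>"] r k ne m2 by simp
      have q1: "(c / \<rho>) / (c / \<rho> - l1 / \<rho>) = K2" using r cne by (simp add: K2_def field_simps)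
      have q2: "(l1 / \<rho>) / (c / \<rho> - l1 / \<rho>) = K1" using r cne by (simp add: K1_def field_simps)
      have "ER \<rho> (\<kappa> * \<rho>)
                 - (((l1 / \<rho>) * log 2 (l2 / (\<kappa> * \<rho>)) - (l2 / (\<kappa> * \<rho>)) * log 2 (l1 / \<rho>))
                      * (1 / (l2 / (\<kappa> * \<rho>) - l1 / \<rho>))
                    - euler_mascheroni / ln 2)
          = (c / \<rho> * (exp (l1 / \<rho>) * En (l1 / \<rho>)) - l1 / \<rho> * (exp (c / \<rho>) * En (c / \<rho>))) / ((c / \<rho> - l1 / \<rho>) * ln 2)
            - (((l1 / \<rho>) * (ln (c / \<rho>) / ln 2) - (c / \<rho>) * (ln (l1 / \<rho>) / ln 2))
                      * (1 / (c / \<rho> - l1 / \<rho>)) - euler_mascheroni / ln 2)"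
        unfolding ER1 m2 by (simp add: log_def mult.assoc)
      also have "\<dots> = K2 * (B l1 \<rho> / ln 2) - K1 * (B c \<rho> / ln 2)"
      proof -
        have ln2: "ln 2 \<noteq> (0::real)" by simp
        show ?thesis unfolding alg_identity[OF ne ln2] q1 q2 B_def by simp
      qed
      finally show "K2 * (B l1 \<rho> / ln 2) - K1 * (B c \<rho> / ln 2) =
              ER \<rho> (\<kappa> * \<rho>)
                 - (((l1 / \<rho>) * log 2 (l2 / (\<kappa> * \<rho>)) - (l2 / (\<kappa> * \<rho>)) * log 2 (l1 / \<rho>))
                      * (1 / (l2 / (\<kappa> * \<rho>) - l1 / \<rho>))
                    - euler_mascheroni / ln 2)" by simp
    qed
    show ?thesis by (rule Lim_transform_eventually[OF lim ev])
  qed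
  show ?thesis using part1 part2 by blast
qed

end
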